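(* Given two finite-valued logics $\mathbf{M}_1$ and $\mathbf{M}_2$ over the same propositional language, it is decidable whether $\mathrm{Taut}(\mathbf{M}_1)=\mathrm{Taut}(\mathbf{M}_2)$, and it is decidable whether $\mathbf{M}_1\unlhd\mathbf{M}_2$, i.e., whether $\mathrm{Taut}(\mathbf{M}_1)\subseteq\mathrm{Taut}(\mathbf{M}_2)$.
   Context: A propositional language has variables $X_1,X_2,\ldots$ and finitely many connectives with arities. A finite-valued logic $\mathbf{M}$ is given by a finite set $V(\mathbf{M})$ of truth values, designated values $V^+(\mathbf{M})\subseteq V(\mathbf{M})$, and a truth function for each connective. A valuation maps variables to truth values and extends to formulas via the truth functions; a tautology is a formula designated under every valuation; $\mathrm{Taut}(\mathbf{M})$ is the set of tautologies. *)

theory Defs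
  imports Main "HOL-Library.Nat_Bijection"
begin

datatype recf = Z | S | Proj nat | Comp recf "recf list" | Prec recf recf | Mn recf

inductive rf_eval :: "recf \<Rightarrow> nat list \<Rightarrow> nat \<Rightarrow> bool" where
  zero: "rf_eval Z xs 0"
| succ: "rf_eval S [x] (Suc x)"
| proj: "i < length xs \<Longrightarrow> rf_eval (Proj i) xs (xs ! i)"
| comp: "list_all2 (\<lambda>g y. rf_eval g xs y) gs ys \<Longrightarrow> rf_eval f ys r \<Longrightarrow> rf_eval (Comp f gs) xs r"
| prec0: "rf_eval f xs r \<Longrightarrow> rf_eval (Prec f g) (0 # xs) r"
| precS: "rf_eval (Prec f g) (y # xs) r \<Longrightarrow> rf_eval g (y # r # xs) r'
          \<Longrightarrow> rf_eval (Prec f g) (Suc y # xs) r'"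
| mn: "rf_eval f (r # xs) 0 \<Longrightarrow> (\<forall>y<r. \<exists>z. rf_eval f (y # xs) (Suc z))
          \<Longrightarrow> rf_eval (Mn f) xs r"

definition decidable_set :: "nat set \<Rightarrow> bool" where
  "decidable_set A \<longleftrightarrow> (\<exists>f. \<forall>x. rf_eval f [x] (if x \<in> A then 1 else 0))"

text \<open>A language is given by the list of arities of its connectives (connective c has arity ar ! c).
  Variables X_1, X_2, ... are Var 0, Var 1, ...\<close>
datatype form = Var nat | App nat "form list"

fun wf_form :: "nat list \<Rightarrow> form \<Rightarrow> bool" where
  "wf_form ar (Var i) = True"
| "wf_form ar (App c ts) = (c < length ar \<and> length ts = ar ! c \<and> list_all (wf_form ar) ts)"

text \<open>A finite-valued logic is a triple (n, des, tabs): truth values {0..<n}, designated values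
  set des, and for each connective c a truth table tabs ! c, listing the value at
  arguments as (a_1,...,a_k) at position given by the base-n number a_1 ... a_k.\<close>
type_synonym logic = "nat \<times> nat list \<times> nat list list"

fun tindex :: "nat \<Rightarrow> nat list \<Rightarrow> nat" where
  "tindex n [] = 0"
| "tindex n (a # as) = a * n ^ length as + tindex n as"

definition wf_logic :: "nat list \<Rightarrow> logic \<Rightarrow> bool" where
  "wf_logic ar M = (case M of (n, des, tabs) \<Rightarrow>
      0 < n \<and> set des \<subseteq> {..<n} \<and> length tabs = length ar \<and>
      (\<forall>c < length ar. length (tabs ! c) = n ^ (ar ! c) \<and> (\<forall>x \<in> set (tabs ! c). x < n)))"

fun feval :: "logic \<Rightarrow> (nat \<Rightarrow> nat) \<Rightarrow> form \<Rightarrow> nat" where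
  "feval M v (Var i) = v i"
| "feval M v (App c ts) = (case M of (n, des, tabs) \<Rightarrow> tabs ! c ! tindex n (map (feval M v) ts))"

definition Taut :: "nat list \<Rightarrow> logic \<Rightarrow> form set" where
  "Taut ar M = (case M of (n, des, tabs) \<Rightarrow>
     {\<phi>. wf_form ar \<phi> \<and> (\<forall>v. (\<forall>i. v i < n) \<longrightarrow> feval M v \<phi> \<in> set des)})"

definition encode_logic :: "logic \<Rightarrow> nat" where
  "encode_logic M = (case M of (n, des, tabs) \<Rightarrow>
     prod_encode (n, prod_encode (list_encode des, list_encode (map list_encode tabs))))"

definition encode_instance :: "nat list \<Rightarrow> logic \<Rightarrow> logic \<Rightarrow> nat" where
  "encode_instance ar M1 M2 =
     prod_encode (list_encode ar, prod_encode (encode_logic M1, encode_logic M2))"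

end

theory Submission
  imports Defs
begin

definition recfn :: "nat \<Rightarrow> (nat list \<Rightarrow> nat) \<Rightarrow> bool" where
  "recfn k f \<longleftrightarrow> (\<exists>r. \<forall>xs. length xs = k \<longrightarrow> rf_eval r xs (f xs))"

lemma recfn_cong: "recfn k f \<Longrightarrow> (\<And>xs. length xs = k \<Longrightarrow> f xs = g xs) \<Longrightarrow> recfn k g"
  unfolding recfn_def by metis

lemma recfn_proj: "i < k \<Longrightarrow> recfn k (\<lambda>xs. xs ! i)"
  unfolding recfn_def by (auto intro!: exI[of _ "Proj i"] rf_eval.proj)

lemma recfn_zero: "recfn k (\<lambda>xs. 0)"
  unfolding recfn_def by (auto intro!: exI[of _ Z] rf_eval.zero)

lemma recfn_succ: "recfn 1 (\<lambda>xs. Suc (xs ! 0))"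
  unfolding recfn_def
proof (rule exI[of _ S], intro allI impI)
  fix xs :: "nat list" assume "length xs = 1"
  then obtain x where "xs = [x]" by (cases xs) auto
  then show "rf_eval S xs (Suc (xs ! 0))" by (auto intro: rf_eval.succ)
qed

lemma recfn_comp:
  assumes f: "recfn (length gs) f" and gs: "\<forall>g\<in>set gs. recfn k g"
  shows "recfn k (\<lambda>xs. f (map (\<lambda>g. g xs) gs))"
proof -
  have "\<exists>rs. length rs = length gs \<and> (\<forall>xs. length xs = k \<longrightarrow> list_all2 (\<lambda>r g. rf_eval r xs (g xs)) rs gs)"
    using gs
  proof (induction gs)
    case Nil then show ?case by auto
  next
    case (Cons g gs)
    then obtain rs where rs: "length rs = length gs" "\<forall>xs. length xs = k \<longrightarrow> list_all2 (\<lambda>r g. rf_eval r xs (g xs)) rs gs"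
      by auto
    from Cons.prems obtain r where "\<forall>xs. length xs = k \<longrightarrow> rf_eval r xs (g xs)" unfolding recfn_def by auto
    with rs show ?case by (intro exI[of _ "r # rs"]) auto
  qed
  then obtain rs where rs: "length rs = length gs" "\<forall>xs. length xs = k \<longrightarrow> list_all2 (\<lambda>r g. rf_eval r xs (g xs)) rs gs"
    by auto
  from f obtain rf where rf: "\<forall>ys. length ys = length gs \<longrightarrow> rf_eval rf ys (f ys)" unfolding recfn_def by auto
  show ?thesis unfolding recfn_def
  proof (rule exI[of _ "Comp rf rs"], intro allI impI)
    fix xs :: "nat list" assume "length xs = k"
    with rs have "list_all2 (\<lambda>r y. rf_eval r xs y) rs (map (\<lambda>g. g xs) gs)"
      by (auto simp: list_all2_map2)
    moreover have "rf_eval rf (map (\<lambda>g. g xs) gs) (f (map (\<lambda>g. g xs) gs))" using rf by simp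
    ultimately show "rf_eval (Comp rf rs) xs (f (map (\<lambda>g. g xs) gs))" by (rule rf_eval.comp)
  qed
qed

lemma recfn_prec:
  assumes f: "recfn k f" and g: "recfn (Suc (Suc k)) g"
  shows "recfn (Suc k) (\<lambda>xs. rec_nat (f (tl xs)) (\<lambda>y r. g (y # r # tl xs)) (hd xs))"
proof -
  from f obtain rf where rf: "\<forall>ys. length ys = k \<longrightarrow> rf_eval rf ys (f ys)" unfolding recfn_def by auto
  from g obtain rg where rg: "\<forall>ys. length ys = Suc (Suc k) \<longrightarrow> rf_eval rg ys (g ys)" unfolding recfn_def by auto
  show ?thesis unfolding recfn_def
  proof (rule exI[of _ "Prec rf rg"], intro allI impI)
    fix xs :: "nat list" assume "length xs = Suc k"
    then obtain y ys where xs: "xs = y # ys" and ys: "length ys = k" by (cases xs) auto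
    have "rf_eval (Prec rf rg) (y # ys) (rec_nat (f ys) (\<lambda>y r. g (y # r # ys)) y)"
    proof (induction y)
      case 0 then show ?case using rf ys by (auto intro: rf_eval.prec0)
    next
      case (Suc y) then show ?case using rg ys by (auto intro: rf_eval.precS)
    qed
    then show "rf_eval (Prec rf rg) xs (rec_nat (f (tl xs)) (\<lambda>y r. g (y # r # tl xs)) (hd xs))"
      using xs by simp
  qed
qed

lemma recfn_mn:
  assumes f: "recfn (Suc k) f" and ex: "\<And>xs. length xs = k \<Longrightarrow> \<exists>r. f (r # xs) = 0"
  shows "recfn k (\<lambda>xs. LEAST r. f (r # xs) = 0)"
proof -
  from f obtain rf where rf: "\<forall>ys. length ys = Suc k \<longrightarrow> rf_eval rf ys (f ys)" unfolding recfn_def by auto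
  show ?thesis unfolding recfn_def
  proof (rule exI[of _ "Mn rf"], intro allI impI)
    fix xs :: "nat list" assume l: "length xs = k"
    let ?r = "LEAST r. f (r # xs) = 0"
    have "f (?r # xs) = 0" using ex[OF l] by (rule LeastI_ex)
    then have 1: "rf_eval rf (?r # xs) 0" using rf l by (metis length_Cons)
    have 2: "\<forall>y<?r. \<exists>z. rf_eval rf (y # xs) (Suc z)"
    proof (intro allI impI)
      fix y assume "y < ?r"
      then have "f (y # xs) \<noteq> 0" by (rule not_less_Least)
      then obtain z where "f (y # xs) = Suc z" by (cases "f (y # xs)") auto
      then show "\<exists>z. rf_eval rf (y # xs) (Suc z)" using rf l by (metis length_Cons)
    qed
    show "rf_eval (Mn rf) xs ?r" using 1 2 by (rule rf_eval.mn)
  qed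
qed

definition rec1 :: "(nat \<Rightarrow> nat) \<Rightarrow> bool" where
  "rec1 f \<longleftrightarrow> recfn 1 (\<lambda>xs. f (xs ! 0))"

definition rec2 :: "(nat \<Rightarrow> nat \<Rightarrow> nat) \<Rightarrow> bool" where
  "rec2 f \<longleftrightarrow> recfn 2 (\<lambda>xs. f (xs ! 0) (xs ! 1))"

lemma recfn_c1: "rec1 f \<Longrightarrow> recfn k g \<Longrightarrow> recfn k (\<lambda>xs. f (g xs))"
  unfolding rec1_def using recfn_comp[of "[g]" "\<lambda>xs. f (xs ! 0)" k] by simp

lemma recfn_c2: "rec2 f \<Longrightarrow> recfn k g \<Longrightarrow> recfn k h \<Longrightarrow> recfn k (\<lambda>xs. f (g xs) (h xs))"
  unfolding rec2_def using recfn_comp[of "[g, h]" "\<lambda>xs. f (xs ! 0) (xs ! 1)" k] by (simp add: numeral_2_eq_2)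

lemma rec1_id: "rec1 (\<lambda>x. x)"
  unfolding rec1_def by (rule recfn_proj) simp

lemma rec1_Suc: "rec1 Suc"
  unfolding rec1_def by (rule recfn_succ)

lemma rec1_comp: "rec1 f \<Longrightarrow> rec1 g \<Longrightarrow> rec1 (\<lambda>x. f (g x))"
  unfolding rec1_def[of "\<lambda>x. f (g x)"] by (rule recfn_c1) (auto simp: rec1_def)

lemma rec1_comp2: "rec2 h \<Longrightarrow> rec1 f \<Longrightarrow> rec1 g \<Longrightarrow> rec1 (\<lambda>x. h (f x) (g x))"
  unfolding rec1_def[of "\<lambda>x. h (f x) (g x)"] by (rule recfn_c2) (auto simp: rec1_def)

lemma rec2_comp2: "rec2 h \<Longrightarrow> rec2 f \<Longrightarrow> rec2 g \<Longrightarrow> rec2 (\<lambda>x y. h (f x y) (g x y))"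
  unfolding rec2_def[of "\<lambda>x y. h (f x y) (g x y)"] by (rule recfn_c2) (auto simp: rec2_def)

lemma rec2_c1: "rec1 h \<Longrightarrow> rec2 f \<Longrightarrow> rec2 (\<lambda>x y. h (f x y))"
  unfolding rec2_def[of "\<lambda>x y. h (f x y)"] by (rule recfn_c1) (auto simp: rec2_def)

lemma rec2_p0: "rec2 (\<lambda>x y. x)" unfolding rec2_def by (rule recfn_proj) simp
lemma rec2_p1: "rec2 (\<lambda>x y. y)" unfolding rec2_def by (rule recfn_proj) simp

lemma rec1_const: "rec1 (\<lambda>x. c)"
proof (induction c)
  case 0 then show ?case unfolding rec1_def by (rule recfn_zero)
next
  case (Suc c) then show ?case using rec1_comp[OF rec1_Suc] by blast
qed

lemma rec2_add: "rec2 (\<lambda>a b. a + b)"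
proof -
  have "recfn 3 (\<lambda>xs. Suc (xs ! 1))" by (rule recfn_c1[OF rec1_Suc recfn_proj]) simp
  then have "recfn (Suc 1) (\<lambda>xs. rec_nat (tl xs ! 0) (\<lambda>y r. Suc ((y # r # tl xs) ! 1)) (hd xs))"
    using recfn_prec[of 1 "\<lambda>xs. xs ! 0" "\<lambda>xs. Suc (xs ! 1)"] recfn_proj[of 0 1] by (simp add: numeral_3_eq_3)
  then have "recfn 2 (\<lambda>xs. rec_nat (tl xs ! 0) (\<lambda>y r. Suc ((y # r # tl xs) ! 1)) (hd xs))"
    by (simp add: numeral_2_eq_2)
  then show ?thesis unfolding rec2_def
  proof (rule recfn_cong)
    fix xs :: "nat list" assume "length xs = 2"
    then obtain a b where "xs = [a, b]" by (cases xs; cases "tl xs") auto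
    then show "rec_nat (tl xs ! 0) (\<lambda>y r. Suc ((y # r # tl xs) ! 1)) (hd xs) = xs ! 0 + xs ! 1"
      by (induction a arbitrary: xs) auto
  qed
qed

definition rec3 :: "(nat \<Rightarrow> nat \<Rightarrow> nat \<Rightarrow> nat) \<Rightarrow> bool" where
  "rec3 f \<longleftrightarrow> recfn 3 (\<lambda>xs. f (xs ! 0) (xs ! 1) (xs ! 2))"

lemma rec3_c2: "rec2 h \<Longrightarrow> rec3 f \<Longrightarrow> rec3 g \<Longrightarrow> rec3 (\<lambda>x y z. h (f x y z) (g x y z))"
  unfolding rec3_def[of "\<lambda>x y z. h (f x y z) (g x y z)"] by (rule recfn_c2) (auto simp: rec3_def)
lemma rec3_c1: "rec1 h \<Longrightarrow> rec3 f \<Longrightarrow> rec3 (\<lambda>x y z. h (f x y z))"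
  unfolding rec3_def[of "\<lambda>x y z. h (f x y z)"] by (rule recfn_c1) (auto simp: rec3_def)
lemma rec3_p0: "rec3 (\<lambda>x y z. x)" unfolding rec3_def by (rule recfn_proj) simp
lemma rec3_p1: "rec3 (\<lambda>x y z. y)" unfolding rec3_def by (rule recfn_proj) simp
lemma rec3_p2: "rec3 (\<lambda>x y z. z)" unfolding rec3_def by (rule recfn_proj) simp

lemma len3: "length xs = 3 \<Longrightarrow> xs = [xs ! 0, xs ! 1, xs ! 2]"
  by (cases xs; cases "tl xs"; cases "tl (tl xs)") (auto simp: numeral_3_eq_3)
lemma len2: "length xs = 2 \<Longrightarrow> xs = [xs ! 0, xs ! 1]"
  by (cases xs; cases "tl xs") (auto simp: numeral_2_eq_2)
lemma len1: "length xs = 1 \<Longrightarrow> xs = [xs ! 0]"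
  by (cases xs) auto

lemma rec2_prec: assumes "rec1 f" "rec3 g" shows "rec2 (\<lambda>y x. rec_nat (f x) (\<lambda>i r. g i r x) y)"
proof -
  have "recfn (Suc 1) (\<lambda>xs. rec_nat (f (tl xs ! 0)) (\<lambda>y r. g ((y # r # tl xs) ! 0) ((y # r # tl xs) ! 1) ((y # r # tl xs) ! 2)) (hd xs))"
    using recfn_prec[of 1 "\<lambda>xs. f (xs ! 0)" "\<lambda>xs. g (xs ! 0) (xs ! 1) (xs ! 2)"] assms
    unfolding rec1_def rec3_def by (simp add: numeral_3_eq_3)
  then have "recfn 2 (\<lambda>xs. rec_nat (f (tl xs ! 0)) (\<lambda>y r. g ((y # r # tl xs) ! 0) ((y # r # tl xs) ! 1) ((y # r # tl xs) ! 2)) (hd xs))"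
    by (simp add: numeral_2_eq_2)
  then show ?thesis unfolding rec2_def
  proof (rule recfn_cong)
    fix xs :: "nat list" assume "length xs = 2"
    then obtain a b where "xs = [a, b]" by (cases xs; cases "tl xs") (auto simp: numeral_2_eq_2)
    then show "rec_nat (f (tl xs ! 0)) (\<lambda>y r. g ((y # r # tl xs) ! 0) ((y # r # tl xs) ! 1) ((y # r # tl xs) ! 2)) (hd xs) =
      rec_nat (f (xs ! 1)) (\<lambda>i r. g i r (xs ! 1)) (xs ! 0)" by simp
  qed
qed

lemma rec1_prec0: assumes "rec2 g" shows "rec1 (\<lambda>y. rec_nat 0 (\<lambda>i r. g i r) y)"
proof -
  have "recfn (Suc 0) (\<lambda>xs. rec_nat 0 (\<lambda>y r. g ((y # r # tl xs) ! 0) ((y # r # tl xs) ! 1)) (hd xs))"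
    using recfn_prec[of 0 "\<lambda>xs. 0" "\<lambda>xs. g (xs ! 0) (xs ! 1)"] assms recfn_zero
    unfolding rec2_def by (simp add: numeral_2_eq_2)
  then have "recfn 1 (\<lambda>xs. rec_nat 0 (\<lambda>y r. g ((y # r # tl xs) ! 0) ((y # r # tl xs) ! 1)) (hd xs))"
    by simp
  then show ?thesis unfolding rec1_def
  proof (rule recfn_cong)
    fix xs :: "nat list" assume "length xs = 1"
    then obtain x where "xs = [x]" by (cases xs) auto
    then show "rec_nat 0 (\<lambda>y r. g ((y # r # tl xs) ! 0) ((y # r # tl xs) ! 1)) (hd xs) = rec_nat 0 g (xs ! 0)"
      by simp
  qed
qed

lemma rec2_mult: "rec2 (\<lambda>a b. a * b)"
proof -
  have "rec2 (\<lambda>y x. rec_nat 0 (\<lambda>i r. r + x) y)"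
    by (rule rec2_prec[OF rec1_const rec3_c2[OF rec2_add rec3_p1 rec3_p2]])
  moreover have "rec_nat 0 (\<lambda>i r. r + x) y = y * x" for x y :: nat by (induction y) auto
  ultimately show ?thesis by simp
qed

lemma rec2_minus: "rec2 (\<lambda>a b. a - b)"
proof -
  have "rec1 (\<lambda>y. rec_nat 0 (\<lambda>i r. i) y)" by (rule rec1_prec0[OF rec2_p0])
  moreover have "rec_nat 0 (\<lambda>i r. i) y = y - 1" for y :: nat by (cases y) auto
  ultimately have p: "rec1 (\<lambda>y. y - 1)" by simp
  have "rec2 (\<lambda>y x. rec_nat x (\<lambda>i r. r - 1) y)"
    by (rule rec2_prec[OF rec1_id rec3_c1[OF p rec3_p1]])
  moreover have "rec_nat x (\<lambda>i r. r - 1) y = x - y" for x y :: nat by (induction y) auto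
  ultimately have "rec2 (\<lambda>y x. x - y)" by simp
  from rec2_comp2[OF this rec2_p1 rec2_p0] show ?thesis by simp
qed

lemma rec1_triangle: "rec1 triangle"
proof -
  have "rec1 (\<lambda>y. rec_nat 0 (\<lambda>i r. r + Suc i) y)"
    by (rule rec1_prec0[OF rec2_comp2[OF rec2_add rec2_p1 rec2_c1[OF rec1_Suc rec2_p0]]])
  moreover have "rec_nat 0 (\<lambda>i r. r + Suc i) y = triangle y" for y by (induction y) auto
  ultimately show ?thesis by simp
qed

lemma rec2_pe: "rec2 (\<lambda>a b. prod_encode (a, b))"
proof -
  have "rec2 (\<lambda>a b. triangle (a + b) + a)"
    by (rule rec2_comp2[OF rec2_add rec2_c1[OF rec1_triangle rec2_add] rec2_p0])
  then show ?thesis by (simp add: prod_encode_def)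
qed

lemma triangle_mono: "m \<le> n \<Longrightarrow> triangle m \<le> triangle n"
  by (induction n) (auto simp: le_Suc_eq)

lemma pd_char:
  fixes z :: nat
  shows "prod_decode z = (z - triangle (LEAST s. Suc z - triangle (Suc s) = 0),
     (LEAST s. Suc z - triangle (Suc s) = 0) - (z - triangle (LEAST s. Suc z - triangle (Suc s) = 0)))"
proof -
  define s where "s = (LEAST s. Suc z - triangle (Suc s) = 0)"
  obtain a b where ab: "prod_decode z = (a, b)" by (cases "prod_decode z")
  then have z: "z = triangle (a + b) + a"
  proof -
    have "prod_encode (a, b) = z" using ab prod_decode_inverse[of z] by simp
    then show ?thesis by (simp add: prod_encode_def)
  qed
  have "s = a + b" unfolding s_def
  proof (rule Least_equality)
    show "Suc z - triangle (Suc (a + b)) = 0" using z by simp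
  next
    fix y assume "Suc z - triangle (Suc y) = 0"
    then have "z < triangle (Suc y)" by simp
    show "a + b \<le> y"
    proof (rule ccontr)
      assume "\<not> a + b \<le> y"
      then have "triangle (Suc y) \<le> triangle (a + b)" by (intro triangle_mono) simp
      with \<open>z < triangle (Suc y)\<close> z show False by simp
    qed
  qed
  then have "prod_decode z = (z - triangle s, s - (z - triangle s))" using ab z by simp
  then show ?thesis by (simp only: s_def)
qed

lemma rec1_pd_s: "rec1 (\<lambda>z. LEAST s. Suc z - triangle (Suc s) = 0)"
proof -
  have r: "recfn 2 (\<lambda>xs. Suc (xs ! 1) - triangle (Suc (xs ! 0)))"
    using rec2_comp2[OF rec2_minus rec2_c1[OF rec1_Suc rec2_p1] rec2_c1[OF rec1_comp[OF rec1_triangle rec1_Suc] rec2_p0]]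
    unfolding rec2_def by simp
  have "recfn 1 (\<lambda>xs. LEAST r. Suc ((r # xs) ! 1) - triangle (Suc ((r # xs) ! 0)) = 0)"
  proof (rule recfn_mn)
    show "recfn (Suc 1) (\<lambda>xs. Suc (xs ! 1) - triangle (Suc (xs ! 0)))" using r by (simp add: numeral_2_eq_2)
  next
    fix xs :: "nat list" assume "length xs = 1"
    have "Suc (xs ! 0) \<le> triangle (Suc (xs ! 0))" by (induction "xs ! 0") auto
    then show "\<exists>r. Suc ((r # xs) ! 1) - triangle (Suc ((r # xs) ! 0)) = 0" by (intro exI[of _ "xs ! 0"]) simp
  qed
  then show ?thesis unfolding rec1_def by simp
qed

lemma rec1_fst_pd: "rec1 (\<lambda>z. fst (prod_decode z))"
proof -
  have "rec1 (\<lambda>z. z - triangle (LEAST s. Suc z - triangle (Suc s) = 0))"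
    by (rule rec1_comp2[OF rec2_minus rec1_id rec1_comp[OF rec1_triangle rec1_pd_s]])
  then show ?thesis by (simp add: pd_char)
qed

lemma rec1_snd_pd: "rec1 (\<lambda>z. snd (prod_decode z))"
proof -
  have "rec1 (\<lambda>z. (LEAST s. Suc z - triangle (Suc s) = 0) - (z - triangle (LEAST s. Suc z - triangle (Suc s) = 0)))"
    by (rule rec1_comp2[OF rec2_minus rec1_pd_s rec1_comp2[OF rec2_minus rec1_id rec1_comp[OF rec1_triangle rec1_pd_s]]])
  then show ?thesis by (simp add: pd_char)
qed

lemma rec1_if: assumes "rec1 a" "rec1 b" "rec1 c"
  shows "rec1 (\<lambda>x. if a x = 0 then b x else c x)"
proof -
  have "rec1 (\<lambda>x. (1 - a x) * b x + (1 - (1 - a x)) * c x)"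
    by (intro rec1_comp2[OF rec2_add] rec1_comp2[OF rec2_mult] rec1_comp2[OF rec2_minus] rec1_const assms)
  moreover have "(1 - a x) * b x + (1 - (1 - a x)) * c x = (if a x = 0 then b x else c x)" for x
    by auto
  ultimately show ?thesis by simp
qed

lemma rec1_recnat:
  assumes "rec1 n" "rec1 b" "rec1 s"
  shows "rec1 (\<lambda>x. rec_nat (b x) (\<lambda>i a. s (prod_encode (x, prod_encode (i, a)))) (n x))"
proof -
  have "rec3 (\<lambda>i a x. s (prod_encode (x, prod_encode (i, a))))"
    by (rule rec3_c1[OF assms(3) rec3_c2[OF rec2_pe rec3_p2 rec3_c2[OF rec2_pe rec3_p0 rec3_p1]]])
  from rec2_prec[OF assms(2) this] show ?thesis
    by (rule rec1_comp2[OF _ assms(1) rec1_id])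
qed


class encodable =
  fixes enc :: "'a \<Rightarrow> nat"
  assumes enc_inj: "enc x = enc y \<Longrightarrow> x = y"

instantiation nat :: encodable
begin
definition enc_nat :: "nat \<Rightarrow> nat" where "enc_nat n = n"
instance by standard (simp add: enc_nat_def)
end

instantiation bool :: encodable
begin
definition enc_bool :: "bool \<Rightarrow> nat" where "enc_bool b = (if b then 1 else 0)"
instance by standard (auto simp: enc_bool_def split: if_splits)
end

instantiation prod :: (encodable, encodable) encodable
begin
definition enc_prod :: "'a \<times> 'b \<Rightarrow> nat" where "enc_prod p = prod_encode (enc (fst p), enc (snd p))"
instance by standard (auto simp: enc_prod_def prod_eq_iff dest: enc_inj)
end

instantiation list :: (encodable) encodable
begin
definition enc_list :: "'a list \<Rightarrow> nat" where "enc_list xs = list_encode (map enc xs)"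
instance
proof
  fix x y :: "'a list"
  assume "enc x = enc y"
  then have "map enc x = map enc y" by (simp add: enc_list_def list_encode_eq)
  moreover have "inj (enc :: 'a \<Rightarrow> nat)" by (rule injI) (rule enc_inj)
  ultimately show "x = y" by (simp add: inj_map_eq_map)
qed
end

lemma enc_nat[simp]: "enc (n::nat) = n" by (simp add: enc_nat_def)
lemma enc_True[simp]: "enc True = 1" and enc_False[simp]: "enc False = 0" by (simp_all add: enc_bool_def)
lemma enc_pair[simp]: "enc (a, b) = prod_encode (enc a, enc b)" by (simp add: enc_prod_def)
lemma enc_Nil[simp]: "enc [] = 0" by (simp add: enc_list_def)
lemma enc_Cons[simp]: "enc (x # xs) = Suc (prod_encode (enc x, enc xs))" by (simp add: enc_list_def)
lemma enc_eq_iff: "enc x = enc y \<longleftrightarrow> x = y" by (auto dest: enc_inj)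

definition cpt :: "('a::encodable \<Rightarrow> 'b::encodable) \<Rightarrow> bool" where
  "cpt f \<longleftrightarrow> (\<exists>g. rec1 g \<and> (\<forall>x. g (enc x) = enc (f x)))"

lemma cptI: "rec1 g \<Longrightarrow> (\<And>x. g (enc x) = enc (f x)) \<Longrightarrow> cpt f"
  unfolding cpt_def by blast

lemma cpt_id: "cpt (\<lambda>x. x)"
  by (rule cptI[OF rec1_id]) simp

lemma cpt_const: "cpt (\<lambda>x. c)"
  by (rule cptI[OF rec1_const]) simp

lemma cpt_o: "cpt f \<Longrightarrow> cpt g \<Longrightarrow> cpt (\<lambda>x. f (g x))"
  unfolding cpt_def
proof (elim exE conjE)
  fix gf gg assume "rec1 gf" "\<forall>x. gf (enc x) = enc (f x)" "rec1 gg" "\<forall>x. gg (enc x) = enc (g x)"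
  then show "\<exists>h. rec1 h \<and> (\<forall>x. h (enc x) = enc (f (g x)))"
    by (intro exI[of _ "\<lambda>n. gf (gg n)"]) (auto intro: rec1_comp)
qed

lemma cpt_pair: "cpt f \<Longrightarrow> cpt g \<Longrightarrow> cpt (\<lambda>x. (f x, g x))"
  unfolding cpt_def
proof (elim exE conjE)
  fix gf gg assume "rec1 gf" "\<forall>x. gf (enc x) = enc (f x)" "rec1 gg" "\<forall>x. gg (enc x) = enc (g x)"
  then show "\<exists>h. rec1 h \<and> (\<forall>x. h (enc x) = enc (f x, g x))"
    by (intro exI[of _ "\<lambda>n. prod_encode (gf n, gg n)"]) (auto intro: rec1_comp2[OF rec2_pe])
qed

lemma cpt_fst: "cpt f \<Longrightarrow> cpt (\<lambda>x. fst (f x))"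
  unfolding cpt_def
proof (elim exE conjE)
  fix g assume "rec1 g" "\<forall>x. g (enc x) = enc (f x)"
  then show "\<exists>g. rec1 g \<and> (\<forall>x. g (enc x) = enc (fst (f x)))"
    by (intro exI[of _ "\<lambda>n. fst (prod_decode (g n))"]) (auto intro: rec1_comp[OF rec1_fst_pd] simp: enc_prod_def)
qed

lemma cpt_snd: "cpt f \<Longrightarrow> cpt (\<lambda>x. snd (f x))"
  unfolding cpt_def
proof (elim exE conjE)
  fix g assume "rec1 g" "\<forall>x. g (enc x) = enc (f x)"
  then show "\<exists>g. rec1 g \<and> (\<forall>x. g (enc x) = enc (snd (f x)))"
    by (intro exI[of _ "\<lambda>n. snd (prod_decode (g n))"]) (auto intro: rec1_comp[OF rec1_snd_pd] simp: enc_prod_def)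
qed

lemma cpt_Cons: "cpt f \<Longrightarrow> cpt g \<Longrightarrow> cpt (\<lambda>x. f x # g x)"
  unfolding cpt_def
proof (elim exE conjE)
  fix gf gg assume "rec1 gf" "\<forall>x. gf (enc x) = enc (f x)" "rec1 gg" "\<forall>x. gg (enc x) = enc (g x)"
  then show "\<exists>h. rec1 h \<and> (\<forall>x. h (enc x) = enc (f x # g x))"
    by (intro exI[of _ "\<lambda>n. Suc (prod_encode (gf n, gg n))"]) (auto intro: rec1_comp[OF rec1_Suc] rec1_comp2[OF rec2_pe])
qed

lemma cpt_nat2:
  assumes "rec2 h" "\<And>a b. h (enc a) (enc b) = enc (F a b)" "cpt f" "cpt g"
  shows "cpt (\<lambda>x. F (f x) (g x))"
proof -
  from assms(3) obtain gf where "rec1 gf" "\<forall>x. gf (enc x) = enc (f x)" unfolding cpt_def by auto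
  moreover from assms(4) obtain gg where "rec1 gg" "\<forall>x. gg (enc x) = enc (g x)" unfolding cpt_def by auto
  ultimately show ?thesis
    by (intro cptI[of "\<lambda>n. h (gf n) (gg n)"] rec1_comp2[OF assms(1)]) (auto simp: assms(2))
qed

lemma cpt_nat1:
  assumes "rec1 h" "\<And>a. h (enc a) = enc (F a)" "cpt f"
  shows "cpt (\<lambda>x. F (f x))"
proof -
  from assms(3) obtain gf where "rec1 gf" "\<forall>x. gf (enc x) = enc (f x)" unfolding cpt_def by auto
  then show ?thesis
    by (intro cptI[of "\<lambda>n. h (gf n)"] rec1_comp[OF assms(1)]) (auto simp: assms(2))
qed

lemma cpt_add: "cpt f \<Longrightarrow> cpt g \<Longrightarrow> cpt (\<lambda>x. f x + g x :: nat)"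
  by (rule cpt_nat2[OF rec2_add, where F="(+)"]) simp_all
lemma cpt_sub: "cpt f \<Longrightarrow> cpt g \<Longrightarrow> cpt (\<lambda>x. f x - g x :: nat)"
  by (rule cpt_nat2[OF rec2_minus, where F="(-)"]) simp_all
lemma cpt_mult: "cpt f \<Longrightarrow> cpt g \<Longrightarrow> cpt (\<lambda>x. f x * g x :: nat)"
  by (rule cpt_nat2[OF rec2_mult, where F="(*)"]) simp_all
lemma cpt_Suc: "cpt f \<Longrightarrow> cpt (\<lambda>x. Suc (f x))"
  by (rule cpt_nat1[OF rec1_Suc, where F=Suc]) simp_all

lemma rec2_const: "rec2 (\<lambda>a b. c)"
  unfolding rec2_def by (rule recfn_c1[OF rec1_const recfn_zero])

lemma rec2_eq: "rec2 (\<lambda>a b. 1 - ((a - b) + (b - a)))"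
  by (rule rec2_comp2[OF rec2_minus rec2_const[of 1] rec2_comp2[OF rec2_add rec2_comp2[OF rec2_minus rec2_p0 rec2_p1] rec2_comp2[OF rec2_minus rec2_p1 rec2_p0]]])

lemma cpt_eq: "cpt f \<Longrightarrow> cpt g \<Longrightarrow> cpt (\<lambda>x. f x = g x)"
  apply (rule cpt_nat2[OF rec2_eq, where F="(=)"])
  subgoal for a b
  proof (cases "a = b")
    case False
    then have "enc a \<noteq> enc b" by (auto dest: enc_inj)
    then show ?thesis using False by simp
  qed simp
  by assumption+

lemma cpt_less: "cpt f \<Longrightarrow> cpt g \<Longrightarrow> cpt (\<lambda>x. (f x :: nat) < g x)"
  by (rule cpt_nat2[OF rec2_comp2[OF rec2_minus rec2_const[of 1] rec2_comp2[OF rec2_minus rec2_const[of 1] rec2_comp2[OF rec2_minus rec2_p1 rec2_p0]]], where F="(<)"])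
     (auto simp: enc_bool_def)

lemma cpt_le: "cpt f \<Longrightarrow> cpt g \<Longrightarrow> cpt (\<lambda>x. (f x :: nat) \<le> g x)"
  by (rule cpt_nat2[OF rec2_comp2[OF rec2_minus rec2_const[of 1] rec2_comp2[OF rec2_minus rec2_p0 rec2_p1]], where F="(\<le>)"])
     (auto simp: enc_bool_def)

lemma cpt_not: "cpt f \<Longrightarrow> cpt (\<lambda>x. \<not> f x)"
  by (rule cpt_nat1[OF rec1_comp2[OF rec2_minus rec1_const rec1_id], where F=Not]) (auto simp: enc_bool_def)

lemma cpt_conj: "cpt f \<Longrightarrow> cpt g \<Longrightarrow> cpt (\<lambda>x. f x \<and> g x)"
  by (rule cpt_nat2[OF rec2_mult, where F="(\<and>)"]) (simp_all add: enc_bool_def)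

lemma cpt_disj: "cpt f \<Longrightarrow> cpt g \<Longrightarrow> cpt (\<lambda>x. f x \<or> g x)"
proof -
  assume "cpt f" "cpt g"
  then have "cpt (\<lambda>x. \<not> (\<not> f x \<and> \<not> g x))" by (intro cpt_not cpt_conj)
  then show ?thesis by simp
qed

lemma cpt_if:
  assumes "cpt P" "cpt f" "cpt g"
  shows "cpt (\<lambda>x. if P x then f x else g x)"
proof -
  from assms(1) obtain gP where "rec1 gP" "\<forall>x. gP (enc x) = enc (P x)" unfolding cpt_def by auto
  moreover from assms(2) obtain gf where "rec1 gf" "\<forall>x. gf (enc x) = enc (f x)" unfolding cpt_def by auto
  moreover from assms(3) obtain gg where "rec1 gg" "\<forall>x. gg (enc x) = enc (g x)" unfolding cpt_def by auto
  ultimately show ?thesis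
    by (intro cptI[of "\<lambda>n. if gP n = 0 then gg n else gf n"] rec1_if) (auto simp: enc_bool_def)
qed

lemma cpt_case_list:
  fixes f :: "'a::encodable \<Rightarrow> 'b::encodable list" and g :: "'a \<Rightarrow> 'c::encodable"
  assumes "cpt f" "cpt g" "cpt (\<lambda>p::'a \<times> 'b \<times> 'b list. h (fst p) (fst (snd p)) (snd (snd p)))"
  shows "cpt (\<lambda>x. case f x of [] \<Rightarrow> g x | y # ys \<Rightarrow> h x y ys)"
proof -
  from assms(1) obtain gf where 1: "rec1 gf" "\<forall>x. gf (enc x) = enc (f x)" unfolding cpt_def by auto
  from assms(2) obtain gg where 2: "rec1 gg" "\<forall>x. gg (enc x) = enc (g x)" unfolding cpt_def by auto
  from assms(3) obtain gh where 3: "rec1 gh" "\<forall>p::'a \<times> 'b \<times> 'b list. gh (enc p) = enc (h (fst p) (fst (snd p)) (snd (snd p)))"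
    unfolding cpt_def by auto
  show ?thesis
  proof (rule cptI[of "\<lambda>n. if gf n = 0 then gg n else gh (prod_encode (n, gf n - 1))"])
    show "rec1 (\<lambda>n. if gf n = 0 then gg n else gh (prod_encode (n, gf n - 1)))"
      by (intro rec1_if 1 2 rec1_comp[OF 3(1)] rec1_comp2[OF rec2_pe] rec1_id rec1_comp2[OF rec2_minus] rec1_const)
  next
    fix x
    show "(if gf (enc x) = 0 then gg (enc x) else gh (prod_encode (enc x, gf (enc x) - 1))) =
          enc (case f x of [] \<Rightarrow> g x | y # ys \<Rightarrow> h x y ys)"
    proof (cases "f x")
      case Nil then show ?thesis using 1 2 by simp
    next
      case (Cons y ys)
      then show ?thesis using 1 3(2)[rule_format, of "(x, y, ys)"] by simp
    qed
  qed
qed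

lemma cpt_recnat:
  fixes b :: "'a::encodable \<Rightarrow> 'b::encodable" and n :: "'a \<Rightarrow> nat"
  assumes "cpt b" "cpt n" "cpt (\<lambda>p::'a \<times> nat \<times> 'b. s (fst p) (fst (snd p)) (snd (snd p)))"
  shows "cpt (\<lambda>x. rec_nat (b x) (s x) (n x))"
proof -
  from assms(1) obtain gb where 1: "rec1 gb" "\<forall>x. gb (enc x) = enc (b x)" unfolding cpt_def by auto
  from assms(2) obtain gn where 2: "rec1 gn" "\<forall>x. gn (enc x) = enc (n x)" unfolding cpt_def by auto
  from assms(3) obtain gs where 3: "rec1 gs" "\<forall>p::'a \<times> nat \<times> 'b. gs (enc p) = enc (s (fst p) (fst (snd p)) (snd (snd p)))"
    unfolding cpt_def by auto
  show ?thesis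
  proof (rule cptI[OF rec1_recnat[OF 2(1) 1(1) 3(1)]])
    fix x
    have "rec_nat (gb (enc x)) (\<lambda>i a. gs (prod_encode (enc x, prod_encode (i, a)))) N = enc (rec_nat (b x) (s x) N)" for N
    proof (induction N)
      case 0 then show ?case using 1 by simp
    next
      case (Suc N) then show ?case using 3(2)[rule_format, of "(x, N, rec_nat (b x) (s x) N)"] by simp
    qed
    then show "rec_nat (gb (enc x)) (\<lambda>i a. gs (prod_encode (enc x, prod_encode (i, a)))) (gn (enc x)) =
          enc (rec_nat (b x) (s x) (n x))" using 2 by simp
  qed
qed

lemma cpt_enc: "cpt f \<Longrightarrow> cpt (\<lambda>x. enc (f x))"
  unfolding cpt_def by simp


named_theorems cpt_intro
declare cpt_id[cpt_intro] cpt_const[cpt_intro] cpt_fst[cpt_intro] cpt_snd[cpt_intro] cpt_pair[cpt_intro]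
  cpt_Cons[cpt_intro] cpt_add[cpt_intro] cpt_sub[cpt_intro] cpt_mult[cpt_intro] cpt_Suc[cpt_intro]
  cpt_eq[cpt_intro] cpt_less[cpt_intro] cpt_le[cpt_intro] cpt_not[cpt_intro] cpt_conj[cpt_intro]
  cpt_disj[cpt_intro] cpt_if[cpt_intro] cpt_case_list[cpt_intro] cpt_recnat[cpt_intro] cpt_enc[cpt_intro]

lemma cpt_tl[cpt_intro]: "cpt f \<Longrightarrow> cpt (\<lambda>x. tl (f x))"
proof -
  assume a: "cpt f"
  have "cpt (\<lambda>x. case f x of [] \<Rightarrow> [] | y # ys \<Rightarrow> ys)"
    by (intro cpt_intro a)
  moreover have "(case f x of [] \<Rightarrow> [] | y # ys \<Rightarrow> ys) = tl (f x)" for x by (cases "f x") auto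
  ultimately show ?thesis by simp
qed

lemma recnat_funpow: "rec_nat b (\<lambda>i. F) N = (F ^^ N) b"
  by (induction N) auto

lemma foldl_iter:
  assumes "length ys \<le> N"
  shows "((\<lambda>st. case snd st of [] \<Rightarrow> st | y # ys \<Rightarrow> (f (fst st) y, ys)) ^^ N) (a, ys) = (foldl f a ys, [])"
  using assms
proof (induction ys arbitrary: a N)
  case Nil
  have "((\<lambda>st. case snd st of [] \<Rightarrow> st | y # ys \<Rightarrow> (f (fst st) y, ys)) ^^ M) (a, []) = (a, [])" for M
    by (induction M) auto
  then show ?case by simp
next
  case (Cons y ys)
  then obtain M where N: "N = Suc M" and "length ys \<le> M" by (cases N) auto
  with Cons.IH show ?case by (simp only: N funpow_Suc_right o_apply) simp
qed

lemma length_le_enc: "length xs \<le> enc xs"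
proof (induction xs)
  case (Cons x xs)
  then show ?case using le_prod_encode_2[of "enc xs" "enc x"] by simp
qed simp

lemma cpt_foldl[cpt_intro]:
  fixes f :: "'a::encodable \<Rightarrow> 'b::encodable \<Rightarrow> 'c::encodable \<Rightarrow> 'b"
  assumes f: "cpt (\<lambda>p. f (fst p) (fst (snd p)) (snd (snd p)))" and a: "cpt a" and xs: "cpt xs"
  shows "cpt (\<lambda>x. foldl (f x) (a x) (xs x))"
proof -
  have f': "cpt (\<lambda>q::('a \<times> nat \<times> 'b \<times> 'c list) \<times> 'c \<times> 'c list. f (fst (fst q)) (fst (snd (snd (fst q)))) (fst (snd q)))"
    using cpt_o[OF f, of "\<lambda>q. (fst (fst q), fst (snd (snd (fst q))), fst (snd q))"]
    by (simp add: cpt_intro)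
  have "cpt (\<lambda>x. fst (rec_nat (a x, xs x) (\<lambda>i st. case snd st of [] \<Rightarrow> st | y # ys \<Rightarrow> (f x (fst st) y, ys)) (enc (xs x))))"
    by (intro cpt_intro a xs f')
  moreover have "fst (rec_nat (a x, xs x) (\<lambda>i st. case snd st of [] \<Rightarrow> st | y # ys \<Rightarrow> (f x (fst st) y, ys)) (enc (xs x)))
     = foldl (f x) (a x) (xs x)" for x
    by (simp add: recnat_funpow foldl_iter length_le_enc)
  ultimately show ?thesis by simp
qed

lemma foldl_rev_acc: "foldl (\<lambda>a y. y # a) acc xs = rev xs @ acc"
  by (induction xs arbitrary: acc) auto

lemma cpt_rev[cpt_intro]: "cpt xs \<Longrightarrow> cpt (\<lambda>x. rev (xs x))"
proof -
  assume a: "cpt xs"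
  have "cpt (\<lambda>x. foldl (\<lambda>a y. y # a) [] (xs x))" by (intro cpt_intro a)
  then show ?thesis by (simp add: foldl_rev_acc)
qed

lemma cpt_append[cpt_intro]: "cpt xs \<Longrightarrow> cpt ys \<Longrightarrow> cpt (\<lambda>x. xs x @ ys x)"
proof -
  assume a: "cpt xs" "cpt ys"
  have "cpt (\<lambda>x. foldl (\<lambda>a y. y # a) (ys x) (rev (xs x)))" by (intro cpt_intro a)
  then show ?thesis by (simp add: foldl_rev_acc)
qed

lemma foldl_map_acc: "foldl (\<lambda>a y. f y # a) acc xs = rev (map f xs) @ acc"
  by (induction xs arbitrary: acc) auto

lemma cpt_map[cpt_intro]:
  assumes "cpt (\<lambda>p. f (fst p) (snd p))" "cpt xs"
  shows "cpt (\<lambda>x. map (f x) (xs x))"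
proof -
  have f': "cpt (\<lambda>p. f (fst p) (snd (snd p)))"
    using cpt_o[OF assms(1), of "\<lambda>p. (fst p, snd (snd p))"] by (simp add: cpt_intro)
  have "cpt (\<lambda>x. rev (foldl (\<lambda>a y. f x y # a) [] (xs x)))" by (intro cpt_intro assms f')
  then show ?thesis by (simp add: foldl_map_acc)
qed

lemma foldl_filter_acc: "foldl (\<lambda>a y. if P y then y # a else a) acc xs = rev (filter P xs) @ acc"
  by (induction xs arbitrary: acc) auto

lemma cpt_filter[cpt_intro]:
  assumes "cpt (\<lambda>p. P (fst p) (snd p))" "cpt xs"
  shows "cpt (\<lambda>x. filter (P x) (xs x))"
proof -
  have f': "cpt (\<lambda>p. P (fst p) (snd (snd p)))"
    using cpt_o[OF assms(1), of "\<lambda>p. (fst p, snd (snd p))"] by (simp add: cpt_intro)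
  have "cpt (\<lambda>x. rev (foldl (\<lambda>a y. if P x y then y # a else a) [] (xs x)))" by (intro cpt_intro assms f')
  then show ?thesis by (simp add: foldl_filter_acc)
qed

lemma foldl_concat_acc: "foldl (\<lambda>a ys. a @ ys) acc xss = acc @ concat xss"
  by (induction xss arbitrary: acc) auto

lemma cpt_concat[cpt_intro]: "cpt xss \<Longrightarrow> cpt (\<lambda>x. concat (xss x))"
proof -
  assume a: "cpt xss"
  have "cpt (\<lambda>x. foldl (\<lambda>a ys. a @ ys) [] (xss x))" by (intro cpt_intro a)
  then show ?thesis by (simp add: foldl_concat_acc)
qed

lemma foldl_length_acc: "foldl (\<lambda>a y. Suc a) acc xs = acc + length xs"
  by (induction xs arbitrary: acc) auto

lemma cpt_length[cpt_intro]: "cpt xs \<Longrightarrow> cpt (\<lambda>x. length (xs x))"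
proof -
  assume a: "cpt xs"
  have "cpt (\<lambda>x. foldl (\<lambda>a y. Suc a) 0 (xs x))" by (intro cpt_intro a)
  then show ?thesis by (simp add: foldl_length_acc)
qed

lemma foldl_ex_acc: "foldl (\<lambda>a y. a \<or> P y) acc xs = (acc \<or> list_ex P xs)"
  by (induction xs arbitrary: acc) auto

lemma cpt_list_ex[cpt_intro]:
  assumes "cpt (\<lambda>p. P (fst p) (snd p))" "cpt xs"
  shows "cpt (\<lambda>x. list_ex (P x) (xs x))"
proof -
  have f': "cpt (\<lambda>p. P (fst p) (snd (snd p)))"
    using cpt_o[OF assms(1), of "\<lambda>p. (fst p, snd (snd p))"] by (simp add: cpt_intro)
  have "cpt (\<lambda>x. foldl (\<lambda>a y. a \<or> P x y) False (xs x))" by (intro cpt_intro assms f')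
  then show ?thesis by (simp add: foldl_ex_acc)
qed

lemma cpt_list_all[cpt_intro]:
  assumes "cpt (\<lambda>p. P (fst p) (snd p))" "cpt xs"
  shows "cpt (\<lambda>x. list_all (P x) (xs x))"
proof -
  have "cpt (\<lambda>x. \<not> list_ex (\<lambda>y. \<not> P x y) (xs x))" by (intro cpt_intro assms)
  then show ?thesis by (simp add: list_ex_iff list_all_iff)
qed

lemma cpt_drop[cpt_intro]: "cpt n \<Longrightarrow> cpt xs \<Longrightarrow> cpt (\<lambda>x. drop (n x) (xs x))"
proof -
  assume a: "cpt n" "cpt xs"
  have "cpt (\<lambda>x. rec_nat (xs x) (\<lambda>i ys. tl ys) (n x))" by (intro cpt_intro a)
  moreover have "rec_nat ys (\<lambda>i ys. tl ys) m = drop m ys" for ys and m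
    by (induction m) (auto simp: drop_Suc tl_drop)
  then have "(\<lambda>x. rec_nat (xs x) (\<lambda>i ys. tl ys) (n x)) = (\<lambda>x. drop (n x) (xs x))" by (intro ext) 
  ultimately show ?thesis by metis
qed

definition lk :: "'a \<Rightarrow> 'a list \<Rightarrow> nat \<Rightarrow> 'a" where
  "lk d xs i = (case drop i xs of [] \<Rightarrow> d | y # ys \<Rightarrow> y)"

lemma lk_nth[simp]: "i < length xs \<Longrightarrow> lk d xs i = xs ! i"
  unfolding lk_def by (simp add: Cons_nth_drop_Suc[symmetric])

lemma cpt_lk[cpt_intro]: "cpt d \<Longrightarrow> cpt xs \<Longrightarrow> cpt i \<Longrightarrow> cpt (\<lambda>x. lk (d x) (xs x) (i x))"
  unfolding lk_def by (intro cpt_intro)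

lemma cpt_upt[cpt_intro]: "cpt n \<Longrightarrow> cpt (\<lambda>x. [0..<n x])"
proof -
  assume a: "cpt n"
  have "cpt (\<lambda>x. rec_nat [] (\<lambda>i a. a @ [i]) (n x))" by (intro cpt_intro a)
  moreover have "rec_nat [] (\<lambda>i a. a @ [i]) m = [0..<m]" for m by (induction m) auto
  ultimately show ?thesis by simp
qed

lemma cpt_power[cpt_intro]: "cpt a \<Longrightarrow> cpt n \<Longrightarrow> cpt (\<lambda>x. a x ^ n x :: nat)"
proof -
  assume a: "cpt a" "cpt n"
  have "cpt (\<lambda>x. rec_nat 1 (\<lambda>i r. r * a x) (n x))" by (intro cpt_intro a cpt_o[OF a(1)])
  moreover have "rec_nat 1 (\<lambda>i r. r * b) m = b ^ m" for m b :: nat by (induction m) auto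
  ultimately show ?thesis by simp
qed

lemma cpt_member[cpt_intro]: "cpt y \<Longrightarrow> cpt xs \<Longrightarrow> cpt (\<lambda>x. y x \<in> set (xs x))"
proof -
  assume a: "cpt y" "cpt xs"
  have "cpt (\<lambda>x. list_ex (\<lambda>z. z = y x) (xs x))" by (intro cpt_intro a cpt_o[OF a(1)])
  then show ?thesis by (simp add: list_ex_iff)
qed

fun tuples :: "'a list \<Rightarrow> nat \<Rightarrow> 'a list list" where
  "tuples W 0 = [[]]"
| "tuples W (Suc a) = concat (map (\<lambda>x. map (\<lambda>t. x # t) (tuples W a)) W)"

lemma set_tuples: "set (tuples W a) = {es. length es = a \<and> set es \<subseteq> set W}"
proof (induction a)
  case 0 then show ?case by auto
next
  case (Suc a)
  show ?case
  proof (intro set_eqI iffI)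
    fix es assume "es \<in> set (tuples W (Suc a))"
    then show "es \<in> {es. length es = Suc a \<and> set es \<subseteq> set W}" using Suc by auto
  next
    fix es assume "es \<in> {es. length es = Suc a \<and> set es \<subseteq> set W}"
    then obtain e es' where "es = e # es'" "length es' = a" "e \<in> set W" "set es' \<subseteq> set W"
      by (cases es) auto
    then show "es \<in> set (tuples W (Suc a))" using Suc by auto
  qed
qed

lemma cpt_tuples[cpt_intro]: "cpt W \<Longrightarrow> cpt a \<Longrightarrow> cpt (\<lambda>x. tuples (W x) (a x))"
proof -
  assume as: "cpt W" "cpt a"
  have "cpt (\<lambda>x. rec_nat [[]] (\<lambda>i T. concat (map (\<lambda>y. map (\<lambda>t. y # t) T) (W x))) (a x))"
    by (intro cpt_intro as cpt_o[OF as(1)])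
  moreover have "rec_nat [[]] (\<lambda>i T. concat (map (\<lambda>y. map (\<lambda>t. y # t) T) W')) m = tuples W' m" for W' m
    by (induction m) auto
  then have "(\<lambda>x. rec_nat [[]] (\<lambda>i T. concat (map (\<lambda>y. map (\<lambda>t. y # t) T) (W x))) (a x)) = (\<lambda>x. tuples (W x) (a x))"
    by (intro ext)
  ultimately show ?thesis by metis
qed


definition wfl :: "nat list \<Rightarrow> logic \<Rightarrow> bool" where
  "wfl ar M = (0 < fst M \<and> list_all (\<lambda>x. x < fst M) (fst (snd M)) \<and> length (snd (snd M)) = length ar \<and>
     list_all (\<lambda>c. length (lk [] (snd (snd M)) c) = fst M ^ lk 0 ar c \<and> list_all (\<lambda>x. x < fst M) (lk [] (snd (snd M)) c))
       [0..<length ar])"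

definition tix :: "nat \<Rightarrow> nat list \<Rightarrow> nat" where
  "tix n as = foldl (\<lambda>acc a. acc * n + a) 0 as"

definition V :: "nat \<Rightarrow> nat \<Rightarrow> nat list list" where
  "V n k = tuples [0..<n] k"

definition gens :: "nat \<Rightarrow> nat \<Rightarrow> nat \<Rightarrow> (nat list \<times> nat list) list" where
  "gens n1 n2 k = map (\<lambda>j. (map (\<lambda>w. lk 0 w j) (V n1 k), map (\<lambda>w. lk 0 w j) (V n2 k))) [0..<k]"

definition appc :: "logic \<Rightarrow> logic \<Rightarrow> nat \<Rightarrow> nat \<Rightarrow> (nat list \<times> nat list) list \<Rightarrow> nat list \<times> nat list" where
  "appc M1 M2 k c es =
    (map (\<lambda>p. lk 0 (lk [] (snd (snd M1)) c) (tix (fst M1) (map (\<lambda>e. lk 0 (fst e) p) es))) [0..<length (V (fst M1) k)],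
     map (\<lambda>p. lk 0 (lk [] (snd (snd M2)) c) (tix (fst M2) (map (\<lambda>e. lk 0 (snd e) p) es))) [0..<length (V (fst M2) k)])"

definition stp :: "nat list \<Rightarrow> logic \<Rightarrow> logic \<Rightarrow> nat \<Rightarrow> (nat list \<times> nat list) list \<Rightarrow> (nat list \<times> nat list) list" where
  "stp ar M1 M2 k SS = SS @ concat (map (\<lambda>c. map (appc M1 M2 k c) (tuples SS (lk 0 ar c))) [0..<length ar])"

definition bnd :: "logic \<Rightarrow> logic \<Rightarrow> nat" where
  "bnd M1 M2 = Suc (fst M1 ^ length (V (fst M1) (fst M2)) * fst M2 ^ length (V (fst M2) (fst M2)))"

definition SN :: "nat list \<Rightarrow> logic \<Rightarrow> logic \<Rightarrow> (nat list \<times> nat list) list" where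
  "SN ar M1 M2 = rec_nat (gens (fst M1) (fst M2) (fst M2)) (\<lambda>i SS. stp ar M1 M2 (fst M2) SS) (bnd M1 M2)"

definition incl :: "nat list \<Rightarrow> logic \<Rightarrow> logic \<Rightarrow> bool" where
  "incl ar M1 M2 = (\<not> list_ex (\<lambda>e. list_all (\<lambda>v. v \<in> set (fst (snd M1))) (fst e) \<and> \<not> list_all (\<lambda>v. v \<in> set (fst (snd M2))) (snd e)) (SN ar M1 M2))"

lemma cpt_wfl[cpt_intro]:
  assumes a: "cpt ar" "cpt M"
  shows "cpt (\<lambda>x. wfl (ar x) (M x))"
  unfolding wfl_def by (intro cpt_intro a a[THEN cpt_o])

lemma cpt_tix[cpt_intro]:
  assumes a: "cpt n" "cpt as"
  shows "cpt (\<lambda>x. tix (n x) (as x))"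
  unfolding tix_def by (intro cpt_intro a a[THEN cpt_o])

lemma cpt_V[cpt_intro]:
  assumes a: "cpt n" "cpt k"
  shows "cpt (\<lambda>x. V (n x) (k x))"
  unfolding V_def by (intro cpt_intro a a[THEN cpt_o])

lemma cpt_gens[cpt_intro]:
  assumes a: "cpt n1" "cpt n2" "cpt k"
  shows "cpt (\<lambda>x. gens (n1 x) (n2 x) (k x))"
  unfolding gens_def by (intro cpt_intro a a[THEN cpt_o])

lemma cpt_appc[cpt_intro]:
  assumes a: "cpt M1" "cpt M2" "cpt k" "cpt c" "cpt es"
  shows "cpt (\<lambda>x. appc (M1 x) (M2 x) (k x) (c x) (es x))"
  unfolding appc_def by (intro cpt_intro a a[THEN cpt_o])

lemma cpt_stp[cpt_intro]:
  assumes a: "cpt ar" "cpt M1" "cpt M2" "cpt k" "cpt SS"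
  shows "cpt (\<lambda>x. stp (ar x) (M1 x) (M2 x) (k x) (SS x))"
  unfolding stp_def by (intro cpt_intro a a[THEN cpt_o])

lemma cpt_bnd[cpt_intro]:
  assumes a: "cpt M1" "cpt M2"
  shows "cpt (\<lambda>x. bnd (M1 x) (M2 x))"
  unfolding bnd_def by (intro cpt_intro a a[THEN cpt_o])

lemma cpt_SN[cpt_intro]:
  assumes a: "cpt ar" "cpt M1" "cpt M2"
  shows "cpt (\<lambda>x. SN (ar x) (M1 x) (M2 x))"
  unfolding SN_def by (intro cpt_intro a a[THEN cpt_o])

lemma cpt_incl[cpt_intro]:
  assumes a: "cpt ar" "cpt M1" "cpt M2"
  shows "cpt (\<lambda>x. incl (ar x) (M1 x) (M2 x))"
  unfolding incl_def by (intro cpt_intro a a[THEN cpt_o])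


fun vb :: "nat \<Rightarrow> form \<Rightarrow> bool" where
  "vb k (Var i) = (i < k)"
| "vb k (App c ts) = list_all (vb k) ts"

fun fsubst :: "(nat \<Rightarrow> form) \<Rightarrow> form \<Rightarrow> form" where
  "fsubst s (Var i) = s i"
| "fsubst s (App c ts) = App c (map (fsubst s) ts)"

lemma feval_agree: "vb k \<phi> \<Longrightarrow> (\<And>i. i < k \<Longrightarrow> u i = v i) \<Longrightarrow> feval M u \<phi> = feval M v \<phi>"
proof (induction \<phi>)
  case (Var i) then show ?case by simp
next
  case (App c ts)
  obtain n d t where M: "M = (n, d, t)" by (cases M)
  from App have eq: "map (feval (n, d, t) u) ts = map (feval (n, d, t) v) ts" by (auto simp: list_all_iff M)
  show ?case by (simp only: M feval.simps prod.case eq)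
qed

lemma feval_subst: "feval M v (fsubst s \<phi>) = feval M (\<lambda>i. feval M v (s i)) \<phi>"
proof (induction \<phi>)
  case (Var i) then show ?case by simp
next
  case (App c ts)
  obtain n d t where M: "M = (n, d, t)" by (cases M)
  from App have eq: "map (feval (n, d, t) v) (map (fsubst s) ts) = map (feval (n, d, t) (\<lambda>i. feval (n, d, t) v (s i))) ts"
    by (auto simp: M)
  show ?case by (simp only: M feval.simps prod.case eq fsubst.simps)
qed

lemma wf_subst: "wf_form ar \<phi> \<Longrightarrow> (\<And>i. wf_form ar (s i)) \<Longrightarrow> wf_form ar (fsubst s \<phi>)"
  by (induction \<phi>) (auto simp: list_all_iff)

lemma vb_subst: "(\<And>i. vb k (s i)) \<Longrightarrow> vb k (fsubst s \<phi>)"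
  by (induction \<phi>) (auto simp: list_all_iff)

lemma tindex_bound: "(\<forall>a\<in>set as. a < n) \<Longrightarrow> tindex n as < n ^ length as"
proof (induction as)
  case Nil then show ?case by simp
next
  case (Cons a as)
  then have 1: "tindex n as < n ^ length as" and 2: "Suc a \<le> n" by auto
  have "a * n ^ length as + tindex n as < a * n ^ length as + n ^ length as" using 1 by simp
  also have "\<dots> = Suc a * n ^ length as" by simp
  also have "\<dots> \<le> n * n ^ length as" using 2 by (rule mult_right_mono) simp
  finally show ?case by simp
qed

lemma tix_tindex: "tix n as = tindex n as"
proof -
  have "foldl (\<lambda>acc a. acc * n + a) acc as = acc * n ^ length as + tindex n as" for acc
    by (induction as arbitrary: acc) (auto simp: algebra_simps)
  then show ?thesis unfolding tix_def by simp
qed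

lemma wf_logicD:
  assumes "wf_logic ar (n, d, t)"
  shows "0 < n" "set d \<subseteq> {..<n}" "length t = length ar"
    "\<And>c. c < length ar \<Longrightarrow> length (t ! c) = n ^ (ar ! c)"
    "\<And>c x. c < length ar \<Longrightarrow> x \<in> set (t ! c) \<Longrightarrow> x < n"
  using assms unfolding wf_logic_def by auto

lemma feval_bound:
  assumes wf: "wf_logic ar (n, d, t)" and "wf_form ar \<phi>" and v: "\<And>i. v i < n"
  shows "feval (n, d, t) v \<phi> < n"
  using assms(2)
proof (induction \<phi>)
  case (Var i) then show ?case using v by simp
next
  case (App c ts)
  then have c: "c < length ar" and l: "length ts = ar ! c" and w: "\<forall>x\<in>set ts. wf_form ar x"
    by (auto simp: list_all_iff)
  have "\<forall>a\<in>set (map (feval (n, d, t) v) ts). a < n" using App.IH w by auto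
  from tindex_bound[OF this] have "tindex n (map (feval (n, d, t) v) ts) < length (t ! c)"
    using wf_logicD(4)[OF wf c] l by simp
  then have "t ! c ! tindex n (map (feval (n, d, t) v) ts) \<in> set (t ! c)" by simp
  then show ?case using wf_logicD(5)[OF wf c] by simp
qed

lemma wfl_iff: "wfl ar M = wf_logic ar M"
proof -
  obtain n d t where M: "M = (n, d, t)" by (cases M)
  show ?thesis
  proof
    assume "wfl ar M"
    then show "wf_logic ar M" unfolding M wfl_def wf_logic_def
      by (auto simp: list_all_iff)
  next
    assume "wf_logic ar M"
    then show "wfl ar M" unfolding M wfl_def wf_logic_def
      by (auto simp: list_all_iff)
  qed
qed

lemma lk_in: "lk d xs i \<in> insert d (set xs)"
proof (cases "drop i xs")
  case (Cons a l)
  then have "a \<in> set xs" by (metis in_set_dropD list.set_intros(1))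
  then show ?thesis using Cons unfolding lk_def by simp
qed (simp add: lk_def)

lemma V_val: "w \<in> set (V n k) \<Longrightarrow> 0 < n \<Longrightarrow> lk 0 w i < n"
  using lk_in[of 0 w i] unfolding V_def set_tuples by auto

lemma V_mem: "length w = k \<Longrightarrow> (\<forall>x\<in>set w. x < n) \<Longrightarrow> w \<in> set (V n k)"
  unfolding V_def set_tuples by auto

lemma taut_iff:
  assumes wf: "wf_logic ar (n, d, t)" and "wf_form ar \<phi>" and "vb k \<phi>"
  shows "\<phi> \<in> Taut ar (n, d, t) \<longleftrightarrow> (\<forall>w\<in>set (V n k). feval (n, d, t) (\<lambda>i. lk 0 w i) \<phi> \<in> set d)"
proof
  assume "\<phi> \<in> Taut ar (n, d, t)"
  then show "\<forall>w\<in>set (V n k). feval (n, d, t) (\<lambda>i. lk 0 w i) \<phi> \<in> set d"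
    using V_val wf_logicD(1)[OF wf] unfolding Taut_def by auto
next
  assume a: "\<forall>w\<in>set (V n k). feval (n, d, t) (\<lambda>i. lk 0 w i) \<phi> \<in> set d"
  show "\<phi> \<in> Taut ar (n, d, t)" unfolding Taut_def
  proof (simp, intro conjI allI impI)
    show "wf_form ar \<phi>" by fact
  next
    fix u :: "nat \<Rightarrow> nat" assume u: "\<forall>i. u i < n"
    let ?w = "map u [0..<k]"
    have "?w \<in> set (V n k)" using u by (intro V_mem) auto
    with a have "feval (n, d, t) (\<lambda>i. lk 0 ?w i) \<phi> \<in> set d" by blast
    moreover have "feval (n, d, t) (\<lambda>i. lk 0 ?w i) \<phi> = feval (n, d, t) u \<phi>"
      by (rule feval_agree[OF assms(3)]) simp
    ultimately show "feval (n, d, t) u \<phi> \<in> set d" by simp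
  qed
qed

lemma comp_eq:
  assumes wf: "wf_logic ar (n, d, t)" and c: "c < length ar" and l: "length ts = ar ! c"
    and w: "\<forall>\<phi>\<in>set ts. wf_form ar \<phi>" and L: "\<forall>w\<in>set L. \<forall>i. lk 0 w i < n"
  shows "map (\<lambda>p. lk 0 (lk [] t c) (tix n (map (\<lambda>\<phi>. lk 0 (map (\<lambda>w. feval (n, d, t) (\<lambda>i. lk 0 w i) \<phi>) L) p) ts))) [0..<length L]
       = map (\<lambda>w. feval (n, d, t) (\<lambda>i. lk 0 w i) (App c ts)) L"
proof (rule nth_equalityI)
  fix p assume "p < length (map (\<lambda>p. lk 0 (lk [] t c) (tix n (map (\<lambda>\<phi>. lk 0 (map (\<lambda>w. feval (n, d, t) (\<lambda>i. lk 0 w i) \<phi>) L) p) ts))) [0..<length L])"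
  then have p: "p < length L" by simp
  let ?v = "\<lambda>i. lk 0 (L ! p) i"
  have v: "\<And>i. ?v i < n" using L p by auto
  have "\<forall>a\<in>set (map (feval (n, d, t) ?v) ts). a < n" using feval_bound[OF wf _ v] w by auto
  from tindex_bound[OF this] have idx: "tindex n (map (feval (n, d, t) ?v) ts) < length (t ! c)"
    using wf_logicD(4)[OF wf c] l by simp
  have tc: "lk [] t c = t ! c" using wf_logicD(3)[OF wf] c by simp
  have "map (\<lambda>\<phi>. lk 0 (map (\<lambda>w. feval (n, d, t) (\<lambda>i. lk 0 w i) \<phi>) L) p) ts = map (feval (n, d, t) ?v) ts"
    using p by simp
  then show "map (\<lambda>p. lk 0 (lk [] t c) (tix n (map (\<lambda>\<phi>. lk 0 (map (\<lambda>w. feval (n, d, t) (\<lambda>i. lk 0 w i) \<phi>) L) p) ts))) [0..<length L] ! p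
       = map (\<lambda>w. feval (n, d, t) (\<lambda>i. lk 0 w i) (App c ts)) L ! p"
    using p idx tc by (simp add: tix_tindex)
qed simp

lemma chain_stab:
  assumes mono: "\<And>t. X t \<subseteq> X (Suc t)" and U: "\<And>t. X t \<subseteq> U" "finite U" and N: "card U < N"
  shows "\<exists>t0<N. X t0 = X (Suc t0)"
proof (rule ccontr)
  assume "\<not> ?thesis"
  then have ne: "\<And>t0. t0 < N \<Longrightarrow> X t0 \<subset> X (Suc t0)" using mono by blast
  have "t \<le> N \<Longrightarrow> t \<le> card (X t)" for t
  proof (induction t)
    case (Suc t)
    have "card (X t) < card (X (Suc t))"
      by (rule psubset_card_mono[OF finite_subset[OF U(1) U(2)] ne]) (use Suc in simp)
    then show ?case using Suc by simp
  qed simp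
  then have "N \<le> card (X N)" by simp
  moreover have "card (X N) \<le> card U" by (rule card_mono[OF U(2) U(1)])
  ultimately show False using N by simp
qed

lemma ex_map_P: "(\<forall>y\<in>set ys. \<exists>x. P x \<and> y = f x) \<Longrightarrow> \<exists>xs. ys = map f xs \<and> (\<forall>x\<in>set xs. P x)"
proof (induction ys)
  case Nil then show ?case by simp
next
  case (Cons y ys)
  then obtain xs where "ys = map f xs" "\<forall>x\<in>set xs. P x" by auto
  moreover from Cons.prems obtain x where "P x" "y = f x" by auto
  ultimately show ?case by (intro exI[of _ "x # xs"]) auto
qed


context
  fixes ar :: "nat list" and n1 d1 t1 n2 d2 t2
  assumes wf1: "wf_logic ar (n1, d1, t1)" and wf2: "wf_logic ar (n2, d2, t2)"
begin

definition sem :: "form \<Rightarrow> nat list \<times> nat list" where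
  "sem \<phi> = (map (\<lambda>w. feval (n1, d1, t1) (\<lambda>i. lk 0 w i) \<phi>) (V n1 n2),
            map (\<lambda>w. feval (n2, d2, t2) (\<lambda>i. lk 0 w i) \<phi>) (V n2 n2))"

definition St :: "nat \<Rightarrow> (nat list \<times> nat list) list" where
  "St m = rec_nat (gens n1 n2 n2) (\<lambda>i SS. stp ar (n1, d1, t1) (n2, d2, t2) n2 SS) m"

lemma St_0: "St 0 = gens n1 n2 n2" by (simp add: St_def)
lemma St_Suc: "St (Suc m) = stp ar (n1, d1, t1) (n2, d2, t2) n2 (St m)" by (simp add: St_def)

lemma SN_St: "SN ar (n1, d1, t1) (n2, d2, t2) = St (bnd (n1, d1, t1) (n2, d2, t2))"
  by (simp add: SN_def St_def)

lemma gens_sem: "set (gens n1 n2 n2) = sem ` Var ` {..<n2}"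
proof -
  have "gens n1 n2 n2 = map (\<lambda>j. sem (Var j)) [0..<n2]" unfolding gens_def sem_def by simp
  then show ?thesis by auto
qed

lemma appc_sem:
  assumes c: "c < length ar" and l: "length ts = ar ! c" and w: "\<forall>\<phi>\<in>set ts. wf_form ar \<phi>"
  shows "appc (n1, d1, t1) (n2, d2, t2) n2 c (map sem ts) = sem (App c ts)"
proof -
  have L1: "\<forall>w\<in>set (V n1 n2). \<forall>i. lk 0 w i < n1" using V_val wf_logicD(1)[OF wf1] by blast
  have L2: "\<forall>w\<in>set (V n2 n2). \<forall>i. lk 0 w i < n2" using V_val wf_logicD(1)[OF wf2] by blast
  show ?thesis
    unfolding appc_def sem_def
    using comp_eq[OF wf1 c l w L1] comp_eq[OF wf2 c l w L2]
    by (simp add: o_def)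
qed

lemma set_stp: "set (stp ar (n1, d1, t1) (n2, d2, t2) n2 SS) =
   set SS \<union> (\<Union>c\<in>{..<length ar}. appc (n1, d1, t1) (n2, d2, t2) n2 c ` {es. length es = ar ! c \<and> set es \<subseteq> set SS})"
  unfolding stp_def by (auto simp: set_tuples)

lemma St_mono1: "set (St m) \<subseteq> set (St (Suc m))"
  by (auto simp: St_Suc set_stp)

lemma St_mono: "m \<le> m' \<Longrightarrow> set (St m) \<subseteq> set (St m')"
  using lift_Suc_mono_le[of "\<lambda>m. set (St m)", OF St_mono1] by blast

lemma St_sound: "e \<in> set (St m) \<Longrightarrow> \<exists>\<phi>. wf_form ar \<phi> \<and> vb n2 \<phi> \<and> e = sem \<phi>"
proof (induction m arbitrary: e)
  case 0
  then obtain j where "e = sem (Var j)" "j < n2" by (auto simp: St_0 gens_sem)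
  then show ?case by (intro exI[of _ "Var j"]) simp
next
  case (Suc m)
  show ?case
  proof (cases "e \<in> set (St m)")
    case True then show ?thesis using Suc.IH by blast
  next
    case False
    with Suc.prems obtain c es where c: "c < length ar" and l: "length es = ar ! c" and es: "set es \<subseteq> set (St m)"
      and e: "e = appc (n1, d1, t1) (n2, d2, t2) n2 c es"
      by (auto simp: St_Suc set_stp)
    have "\<forall>y\<in>set es. \<exists>\<phi>. (wf_form ar \<phi> \<and> vb n2 \<phi>) \<and> y = sem \<phi>" using es Suc.IH by blast
    from ex_map_P[OF this] obtain ts where ts: "es = map sem ts" "\<forall>\<phi>\<in>set ts. wf_form ar \<phi> \<and> vb n2 \<phi>" by blast
    have "e = sem (App c ts)" using e ts appc_sem[OF c] l by simp
    moreover have "wf_form ar (App c ts)" "vb n2 (App c ts)" using c l ts by (auto simp: list_all_iff)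
    ultimately show ?thesis by blast
  qed
qed

lemma St_complete: "wf_form ar \<phi> \<Longrightarrow> vb n2 \<phi> \<Longrightarrow> \<exists>m. sem \<phi> \<in> set (St m)"
proof (induction \<phi>)
  case (Var j)
  then have "sem (Var j) \<in> set (St 0)" by (auto simp: St_0 gens_sem)
  then show ?case by blast
next
  case (App c ts)
  then have c: "c < length ar" and l: "length ts = ar ! c" and w: "\<forall>\<phi>\<in>set ts. wf_form ar \<phi> \<and> vb n2 \<phi>"
    by (auto simp: list_all_iff)
  then have "\<forall>\<phi>\<in>set ts. \<exists>m. sem \<phi> \<in> set (St m)" using App.IH by blast
  then obtain f where f: "\<forall>\<phi>\<in>set ts. sem \<phi> \<in> set (St (f \<phi>))" by metis
  let ?T = "sum_list (map f ts)"
  have "\<forall>\<phi>\<in>set ts. sem \<phi> \<in> set (St ?T)"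
  proof
    fix \<phi> assume "\<phi> \<in> set ts"
    then have "f \<phi> \<le> ?T" by (simp add: member_le_sum_list)
    with f \<open>\<phi> \<in> set ts\<close> show "sem \<phi> \<in> set (St ?T)" using St_mono by blast
  qed
  then have "map sem ts \<in> {es. length es = ar ! c \<and> set es \<subseteq> set (St ?T)}" using l by auto
  then have "appc (n1, d1, t1) (n2, d2, t2) n2 c (map sem ts) \<in>
     (\<Union>c\<in>{..<length ar}. appc (n1, d1, t1) (n2, d2, t2) n2 c ` {es. length es = ar ! c \<and> set es \<subseteq> set (St ?T)})"
    using c by blast
  then have "appc (n1, d1, t1) (n2, d2, t2) n2 c (map sem ts) \<in> set (St (Suc ?T))"
    unfolding St_Suc set_stp by blast
  then show ?case using appc_sem[OF c l] w by auto
qed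

definition U :: "(nat list \<times> nat list) set" where
  "U = {xs. set xs \<subseteq> {..<n1} \<and> length xs = length (V n1 n2)} \<times> {xs. set xs \<subseteq> {..<n2} \<and> length xs = length (V n2 n2)}"

lemma U_finite: "finite U" and U_card: "card U = n1 ^ length (V n1 n2) * n2 ^ length (V n2 n2)"
proof -
  have f1: "finite {xs. set xs \<subseteq> {..<n1} \<and> length xs = length (V n1 n2)}" by (rule finite_lists_length_eq) simp
  have f2: "finite {xs. set xs \<subseteq> {..<n2} \<and> length xs = length (V n2 n2)}" by (rule finite_lists_length_eq) simp
  show "finite U" unfolding U_def using f1 f2 by simp
  show "card U = n1 ^ length (V n1 n2) * n2 ^ length (V n2 n2)"
    unfolding U_def card_cartesian_product by (simp add: card_lists_length_eq)
qed

lemma sem_U: "wf_form ar \<phi> \<Longrightarrow> sem \<phi> \<in> U"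
  unfolding U_def sem_def
  using feval_bound[OF wf1, of \<phi>] feval_bound[OF wf2, of \<phi>]
    V_val[OF _ wf_logicD(1)[OF wf1]] V_val[OF _ wf_logicD(1)[OF wf2]]
  by auto

lemma St_U: "set (St m) \<subseteq> U"
  using St_sound sem_U by blast

lemma St_stable: "set (St m) = set (St m0) \<Longrightarrow> set (St (Suc m)) = set (St (Suc m0))"
  by (simp add: St_Suc set_stp)

lemma St_bound: "set (St m) \<subseteq> set (St (bnd (n1, d1, t1) (n2, d2, t2)))"
proof -
  let ?N = "bnd (n1, d1, t1) (n2, d2, t2)"
  have "card U < ?N" by (simp add: U_card bnd_def)
  from chain_stab[of "\<lambda>m. set (St m)", OF St_mono1 St_U U_finite this]
  obtain t0 where t0: "t0 < ?N" "set (St t0) = set (St (Suc t0))" by blast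
  have stab: "t0 \<le> m' \<Longrightarrow> set (St m') = set (St t0)" for m'
  proof (induction m')
    case 0 then show ?case by simp
  next
    case (Suc m')
    show ?case
    proof (cases "t0 = Suc m'")
      case False
      with Suc have "set (St m') = set (St t0)" by simp
      then have "set (St (Suc m')) = set (St (Suc t0))" by (rule St_stable)
      then show ?thesis using t0 by simp
    qed simp
  qed
  show ?thesis
  proof (cases "m \<le> ?N")
    case True then show ?thesis by (rule St_mono)
  next
    case False
    then show ?thesis using stab[of m] stab[of ?N] t0 by simp
  qed
qed

lemma SN_iff: "e \<in> set (SN ar (n1, d1, t1) (n2, d2, t2)) \<longleftrightarrow> (\<exists>\<phi>. wf_form ar \<phi> \<and> vb n2 \<phi> \<and> e = sem \<phi>)"
  using St_sound St_complete St_bound unfolding SN_St by blast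

theorem incl_correct: "incl ar (n1, d1, t1) (n2, d2, t2) \<longleftrightarrow> Taut ar (n1, d1, t1) \<subseteq> Taut ar (n2, d2, t2)"
proof -
  let ?P = "\<lambda>e. list_all (\<lambda>v. v \<in> set d1) (fst e) \<and> \<not> list_all (\<lambda>v. v \<in> set d2) (snd e)"
  have P: "wf_form ar \<phi> \<Longrightarrow> vb n2 \<phi> \<Longrightarrow> ?P (sem \<phi>) \<longleftrightarrow> (\<phi> \<in> Taut ar (n1, d1, t1) \<and> \<phi> \<notin> Taut ar (n2, d2, t2))" for \<phi>
    by (simp add: sem_def list_all_iff taut_iff[OF wf1] taut_iff[OF wf2])
  have "incl ar (n1, d1, t1) (n2, d2, t2) \<longleftrightarrow> \<not> (\<exists>e. e \<in> set (SN ar (n1, d1, t1) (n2, d2, t2)) \<and> ?P e)"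
    unfolding incl_def list_ex_iff by (simp only: fst_conv snd_conv) blast
  also have "\<dots> \<longleftrightarrow> \<not> (\<exists>\<phi>. wf_form ar \<phi> \<and> vb n2 \<phi> \<and> ?P (sem \<phi>))"
    unfolding SN_iff by blast
  also have "\<dots> \<longleftrightarrow> \<not> (\<exists>\<phi>. wf_form ar \<phi> \<and> vb n2 \<phi> \<and> \<phi> \<in> Taut ar (n1, d1, t1) \<and> \<phi> \<notin> Taut ar (n2, d2, t2))"
    using P by blast
  finally have bad: "incl ar (n1, d1, t1) (n2, d2, t2) \<longleftrightarrow>
     \<not> (\<exists>\<phi>. wf_form ar \<phi> \<and> vb n2 \<phi> \<and> \<phi> \<in> Taut ar (n1, d1, t1) \<and> \<phi> \<notin> Taut ar (n2, d2, t2))" .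
  show ?thesis
  proof
    assume "Taut ar (n1, d1, t1) \<subseteq> Taut ar (n2, d2, t2)"
    then show "incl ar (n1, d1, t1) (n2, d2, t2)" unfolding bad by blast
  next
    assume inc: "incl ar (n1, d1, t1) (n2, d2, t2)"
    show "Taut ar (n1, d1, t1) \<subseteq> Taut ar (n2, d2, t2)"
    proof
      fix \<phi> assume \<phi>: "\<phi> \<in> Taut ar (n1, d1, t1)"
      then have wf: "wf_form ar \<phi>" and t1: "\<And>u. (\<forall>i. u i < n1) \<Longrightarrow> feval (n1, d1, t1) u \<phi> \<in> set d1"
        unfolding Taut_def by auto
      show "\<phi> \<in> Taut ar (n2, d2, t2)"
      proof (rule ccontr)
        assume "\<phi> \<notin> Taut ar (n2, d2, t2)"
        with wf obtain v where v: "\<forall>i. v i < n2" and nd: "feval (n2, d2, t2) v \<phi> \<notin> set d2"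
          unfolding Taut_def by auto
        let ?s = "\<lambda>i. Var (v i)"
        let ?\<psi> = "fsubst ?s \<phi>"
        have wf': "wf_form ar ?\<psi>" by (rule wf_subst[OF wf]) simp
        have vb': "vb n2 ?\<psi>" by (rule vb_subst) (simp add: v)
        have "?\<psi> \<in> Taut ar (n1, d1, t1)"
          unfolding Taut_def using wf' t1 by (auto simp: feval_subst)
        moreover have "?\<psi> \<notin> Taut ar (n2, d2, t2)"
        proof
          assume "?\<psi> \<in> Taut ar (n2, d2, t2)"
          then have "feval (n2, d2, t2) (\<lambda>i. lk 0 [0..<n2] i) ?\<psi> \<in> set d2"
            unfolding Taut_def using V_val[OF V_mem[of "[0..<n2]" n2 n2] wf_logicD(1)[OF wf2]] by auto
          moreover have "feval (n2, d2, t2) (\<lambda>i. lk 0 [0..<n2] i) ?\<psi> = feval (n2, d2, t2) v \<phi>"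
            using v by (simp add: feval_subst)
          ultimately show False using nd by simp
        qed
        ultimately show False using inc wf' vb' unfolding bad by blast
      qed
    qed
  qed
qed

end


lemma enc_nat_id: "(enc :: nat \<Rightarrow> nat) = id" by (rule ext) simp

lemma enc_natlist: "enc (xs :: nat list) = list_encode xs"
  by (simp add: enc_list_def enc_nat_id)

lemma enc_natlistlist: "enc (t :: nat list list) = list_encode (map list_encode t)"
proof -
  have "(enc :: nat list \<Rightarrow> nat) = list_encode" by (rule ext) (simp add: enc_natlist)
  then show ?thesis by (simp add: enc_list_def)
qed

lemma enc_logic: "enc (M :: logic) = encode_logic M"
  by (cases M) (simp add: encode_logic_def enc_natlist enc_natlistlist)

lemma enc_inst: "enc (ar, M1, M2) = encode_instance ar M1 M2"
  by (simp add: encode_instance_def enc_logic enc_natlist)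

lemma inst_surj: "\<exists>ar M1 M2. x = encode_instance ar M1 M2"
proof -
  have logic_surj: "\<exists>M. y = encode_logic M" for y
  proof -
    obtain n r where "prod_decode y = (n, r)" by (cases "prod_decode y")
    moreover obtain a b where "prod_decode r = (a, b)" by (cases "prod_decode r")
    ultimately have "y = encode_logic (n, list_decode a, map list_decode (list_decode b))"
      unfolding encode_logic_def
      by (simp add: o_def) (metis prod_decode_inverse)
    then show ?thesis by blast
  qed
  obtain a r where ar: "prod_decode x = (a, r)" by (cases "prod_decode x")
  obtain m1 m2 where m: "prod_decode r = (m1, m2)" by (cases "prod_decode r")
  obtain M1 where M1: "m1 = encode_logic M1" using logic_surj by blast
  obtain M2 where M2: "m2 = encode_logic M2" using logic_surj by blast
  have "x = encode_instance (list_decode a) M1 M2"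
    unfolding encode_instance_def using ar m M1 M2 by (metis list_decode_inverse prod_decode_inverse)
  then show ?thesis by blast
qed

lemma decide:
  assumes "cpt (P :: nat list \<times> logic \<times> logic \<Rightarrow> bool)"
  shows "decidable_set {encode_instance ar M1 M2 | ar M1 M2. P (ar, M1, M2)}"
proof -
  from assms obtain g where g: "rec1 g" "\<forall>x. g (enc x) = enc (P x)" unfolding cpt_def by blast
  from g(1) obtain r where r: "\<forall>xs. length xs = 1 \<longrightarrow> rf_eval r xs (g (xs ! 0))"
    unfolding rec1_def recfn_def by blast
  show ?thesis unfolding decidable_set_def
  proof (intro exI allI)
    fix x
    obtain ar M1 M2 where x: "x = encode_instance ar M1 M2" using inst_surj by blast
    have mem: "x \<in> {encode_instance ar M1 M2 | ar M1 M2. P (ar, M1, M2)} \<longleftrightarrow> P (ar, M1, M2)"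
    proof
      assume "x \<in> {encode_instance ar M1 M2 | ar M1 M2. P (ar, M1, M2)}"
      then obtain ar' M1' M2' where x': "x = encode_instance ar' M1' M2'" and "P (ar', M1', M2')" by blast
      have "enc (ar', M1', M2') = enc (ar, M1, M2)" unfolding enc_inst using x x' by simp
      then have "(ar', M1', M2') = (ar, M1, M2)" by (rule enc_inj)
      then show "P (ar, M1, M2)" using \<open>P (ar', M1', M2')\<close> by simp
    next
      assume "P (ar, M1, M2)"
      then show "x \<in> {encode_instance ar M1 M2 | ar M1 M2. P (ar, M1, M2)}" using x by blast
    qed
    have "g x = enc (P (ar, M1, M2))" using g(2) x by (metis enc_inst)
    then have "g x = (if x \<in> {encode_instance ar M1 M2 | ar M1 M2. P (ar, M1, M2)} then 1 else 0)"
      using mem by (simp add: enc_bool_def)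
    moreover have "rf_eval r [x] (g x)" using r by (metis One_nat_def length_Cons list.size(3) nth_Cons_0)
    ultimately show "rf_eval r [x] (if x \<in> {encode_instance ar M1 M2 | ar M1 M2. P (ar, M1, M2)} then 1 else 0)"
      by simp
  qed
qed

lemma incl_correct':
  "wf_logic ar M1 \<Longrightarrow> wf_logic ar M2 \<Longrightarrow> incl ar M1 M2 \<longleftrightarrow> Taut ar M1 \<subseteq> Taut ar M2"
  by (cases M1; cases M2) (simp add: incl_correct)

theorem corollary1:
  shows "decidable_set {encode_instance ar M1 M2 | ar M1 M2.
            wf_logic ar M1 \<and> wf_logic ar M2 \<and> Taut ar M1 = Taut ar M2}
       \<and> decidable_set {encode_instance ar M1 M2 | ar M1 M2.
            wf_logic ar M1 \<and> wf_logic ar M2 \<and> Taut ar M1 \<subseteq> Taut ar M2}"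
proof
  let ?P = "\<lambda>x::nat list \<times> logic \<times> logic. wfl (fst x) (fst (snd x)) \<and> wfl (fst x) (snd (snd x)) \<and>
     incl (fst x) (fst (snd x)) (snd (snd x)) \<and> incl (fst x) (snd (snd x)) (fst (snd x))"
  have "cpt ?P" by (intro cpt_intro)
  then have "decidable_set {encode_instance ar M1 M2 | ar M1 M2. ?P (ar, M1, M2)}" by (rule decide)
  moreover have "?P (ar, M1, M2) \<longleftrightarrow> wf_logic ar M1 \<and> wf_logic ar M2 \<and> Taut ar M1 = Taut ar M2" for ar M1 M2
    by (auto simp: wfl_iff incl_correct')
  ultimately show "decidable_set {encode_instance ar M1 M2 | ar M1 M2.
            wf_logic ar M1 \<and> wf_logic ar M2 \<and> Taut ar M1 = Taut ar M2}" by simp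
next
  let ?P = "\<lambda>x::nat list \<times> logic \<times> logic. wfl (fst x) (fst (snd x)) \<and> wfl (fst x) (snd (snd x)) \<and>
     incl (fst x) (fst (snd x)) (snd (snd x))"
  have "cpt ?P" by (intro cpt_intro)
  then have "decidable_set {encode_instance ar M1 M2 | ar M1 M2. ?P (ar, M1, M2)}" by (rule decide)
  moreover have "?P (ar, M1, M2) \<longleftrightarrow> wf_logic ar M1 \<and> wf_logic ar M2 \<and> Taut ar M1 \<subseteq> Taut ar M2" for ar M1 M2
    by (auto simp: wfl_iff incl_correct')
  ultimately show "decidable_set {encode_instance ar M1 M2 | ar M1 M2.
            wf_logic ar M1 \<and> wf_logic ar M2 \<and> Taut ar M1 \<subseteq> Taut ar M2}" by simp
qed

end
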